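(* For any two points $x,y\in\mathbb{R}^n$, the pair $(\{x\},\{y\})$ is an $\mathcal{S}_n$-cute pair, and the pair $(x+B_2^n,\,y+B_2^n)$ is an $\mathcal{S}_n$-cute pair.
   Context: Convex bodies are compact convex non-empty subsets of $\mathbb{R}^n$; $B_2^n$ is the closed Euclidean unit ball; $\delta$ is the Hausdorff distance $\delta(K_0,K_1)=\inf\{\lambda>0: K_0\subseteq K_1+\lambda B_2^n,\ K_1\subseteq K_0+\lambda B_2^n\}$. $\mathcal{S}_n$ is the set of convex bodies in $\mathbb{R}^n$ which are intersections of Euclidean unit balls. A pair $(K_0,K_1)\in\mathcal{S}_n\times\mathcal{S}_n$ is called $\mathcal{S}_n$-cute if $M=\frac{K_0+K_1}{2}$ is the unique body in $\mathcal{S}_n$ satisfying $\delta(K_0,M)=\frac12\delta(K_0,K_1)$ and $\delta(K_1,M)=\frac12\delta(K_0,K_1)$. *)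

theory Defs
  imports "HOL-Analysis.Analysis"
begin

definition convex_body :: "'a::euclidean_space set \<Rightarrow> bool" where
  "convex_body K \<longleftrightarrow> compact K \<and> convex K \<and> K \<noteq> {}"

definition hdist :: "'a::euclidean_space set \<Rightarrow> 'a set \<Rightarrow> real" where
  "hdist K0 K1 = Inf {r. r > 0 \<and> K0 \<subseteq> {a + b | a b. a \<in> K1 \<and> b \<in> cball 0 r} \<and> K1 \<subseteq> {a + b | a b. a \<in> K0 \<and> b \<in> cball 0 r}}"

definition S_set :: "'a::euclidean_space set set" where
  "S_set = {K. convex_body K \<and> (\<exists>C. K = (\<Inter>c\<in>C. cball c 1))}"

definition half_sum :: "'a::euclidean_space set \<Rightarrow> 'a set \<Rightarrow> 'a set" where
  "half_sum K0 K1 = {(1/2::real) *\<^sub>R (a + b) | a b. a \<in> K0 \<and> b \<in> K1}"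

definition S_cute :: "'a::euclidean_space set \<Rightarrow> 'a set \<Rightarrow> bool" where
  "S_cute K0 K1 \<longleftrightarrow> K0 \<in> S_set \<and> K1 \<in> S_set \<and>
     (let M = half_sum K0 K1; d = hdist K0 K1 in
        M \<in> S_set \<and> hdist K0 M = d / 2 \<and> hdist K1 M = d / 2 \<and>
        (\<forall>N\<in>S_set. hdist K0 N = d / 2 \<and> hdist K1 N = d / 2 \<longrightarrow> N = M))"

end

theory Submission
  imports Defs
begin

definition mink :: "'a::euclidean_space set \<Rightarrow> real \<Rightarrow> 'a set" where
  "mink A r = {a + b | a b. a \<in> A \<and> b \<in> cball 0 r}"

lemma half_half: "(1/2::real) *\<^sub>R v + (1/2) *\<^sub>R v = (v::'a::real_vector)"
proof -
  have "(1/2::real) *\<^sub>R v + (1/2) *\<^sub>R v = ((1/2) + (1/2)) *\<^sub>R v" by (rule scaleR_add_left[symmetric])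
  also have "\<dots> = v" by simp
  finally show ?thesis .
qed

lemma mid_dist:
  fixes x y :: "'a::euclidean_space"
  shows "dist x ((1/2) *\<^sub>R (x + y)) = dist x y / 2" "dist y ((1/2) *\<^sub>R (x + y)) = dist x y / 2"
proof -
  have "x - (1/2::real) *\<^sub>R (x + y) = ((1/2) *\<^sub>R x + (1/2) *\<^sub>R x) - (1/2::real) *\<^sub>R (x + y)"
    by (simp only: half_half)
  also have "\<dots> = (1/2) *\<^sub>R (x - y)" by (simp add: scaleR_right_diff_distrib scaleR_add_right)
  finally have "x - (1/2::real) *\<^sub>R (x + y) = (1/2) *\<^sub>R (x - y)" .
  then show "dist x ((1/2) *\<^sub>R (x + y)) = dist x y / 2" by (simp add: dist_norm)
  have "y - (1/2::real) *\<^sub>R (x + y) = ((1/2) *\<^sub>R y + (1/2) *\<^sub>R y) - (1/2::real) *\<^sub>R (x + y)"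
    by (simp only: half_half)
  also have "\<dots> = (1/2) *\<^sub>R (y - x)" by (simp add: scaleR_right_diff_distrib scaleR_add_right)
  finally have "y - (1/2::real) *\<^sub>R (x + y) = (1/2) *\<^sub>R (y - x)" .
  then show "dist y ((1/2) *\<^sub>R (x + y)) = dist x y / 2" by (simp add: dist_norm norm_minus_commute)
qed

lemma mink_mono: "A \<subseteq> B \<Longrightarrow> mink A r \<subseteq> mink B r"
  unfolding mink_def by blast

lemma hdist_mink: "hdist A B = Inf {r. r > 0 \<and> A \<subseteq> mink B r \<and> B \<subseteq> mink A r}"
  unfolding hdist_def mink_def by simp

lemma mink_cball:
  fixes p :: "'a::euclidean_space"
  assumes "s \<ge> 0" "r \<ge> 0"
  shows "mink (cball p s) r = cball p (s + r)"
proof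
  show "mink (cball p s) r \<subseteq> cball p (s + r)"
  proof
    fix z assume "z \<in> mink (cball p s) r"
    then obtain a b where ab: "z = a + b" "dist p a \<le> s" "norm b \<le> r" unfolding mink_def by auto
    have "dist p z = norm ((p - a) - b)" using ab(1) by (simp add: dist_norm algebra_simps)
    also have "\<dots> \<le> norm (p - a) + norm b" by (rule norm_triangle_ineq4)
    also have "\<dots> \<le> s + r" using ab by (simp add: dist_norm)
    finally show "z \<in> cball p (s + r)" by simp
  qed
next
  show "cball p (s + r) \<subseteq> mink (cball p s) r"
  proof
    fix z assume z: "z \<in> cball p (s + r)"
    show "z \<in> mink (cball p s) r"
    proof (cases "dist p z \<le> s")
      case True
      then have "z \<in> cball p s" "z = z + 0" "(0::'a) \<in> cball 0 r" using assms by auto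
      then show ?thesis unfolding mink_def by blast
    next
      case False
      define t where "t = dist p z"
      have t: "t > s" "t > 0" "t \<le> s + r" using False z assms t_def by auto
      define u where "u = (1 / t) *\<^sub>R (z - p)"
      have nu: "norm u = 1" using t unfolding u_def t_def by (simp add: dist_norm norm_minus_commute)
      have h1: "s *\<^sub>R u + (t - s) *\<^sub>R u = t *\<^sub>R u"
      proof -
        have "s *\<^sub>R u + (t - s) *\<^sub>R u = (s + (t - s)) *\<^sub>R u" by (rule scaleR_add_left[symmetric])
        also have "\<dots> = t *\<^sub>R u" by simp
        finally show ?thesis .
      qed
      have h2: "t *\<^sub>R u = z - p" using t(2) unfolding u_def by simp
      have zeq: "z = (p + s *\<^sub>R u) + (t - s) *\<^sub>R u"
      proof -
        have "(p + s *\<^sub>R u) + (t - s) *\<^sub>R u = p + (s *\<^sub>R u + (t - s) *\<^sub>R u)" by (rule add.assoc)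
        also have "\<dots> = p + (z - p)" using h1 h2 by simp
        also have "\<dots> = z" by simp
        finally show ?thesis by simp
      qed
      have "p + s *\<^sub>R u \<in> cball p s" using nu assms by (simp add: dist_norm)
      moreover have "(t - s) *\<^sub>R u \<in> cball 0 r" using nu t by simp
      ultimately show ?thesis unfolding mink_def using zeq by blast
    qed
  qed
qed

lemma hdist_cball:
  fixes p q :: "'a::euclidean_space"
  assumes "s \<ge> 0"
  shows "hdist (cball p s) (cball q s) = dist p q"
proof -
  have "{r. r > 0 \<and> cball p s \<subseteq> mink (cball q s) r \<and> cball q s \<subseteq> mink (cball p s) r}
        = {r. r > 0 \<and> dist p q \<le> r}"
    using assms
    apply (auto simp: mink_cball cball_subset_cball_iff dist_commute)
     apply (rule order_trans[OF dist_triangle[of _ _ p]], simp add: add_mono)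
    apply (rule order_trans[OF dist_triangle[of _ _ q]], simp add: add_mono dist_commute)
    done
  also have "Inf \<dots> = dist p q"
  proof (cases "p = q")
    case True
    then have "{r. r > 0 \<and> dist p q \<le> r} = {0<..}" by auto
    then show ?thesis using True by simp
  next
    case False
    then have "0 < dist p q" by simp
    then have "{r. r > 0 \<and> dist p q \<le> r} = {dist p q..}"
      by (intro set_eqI) (simp only: mem_Collect_eq atLeast_iff, linarith)
    then show ?thesis by simp
  qed
  finally show ?thesis by (simp add: hdist_mink)
qed

lemma hdist_less:
  assumes "hdist A B < r" "\<exists>r0. r0 > 0 \<and> A \<subseteq> mink B r0 \<and> B \<subseteq> mink A r0"
  shows "A \<subseteq> mink B r \<and> B \<subseteq> mink A r"
proof -
  obtain r' where r': "r' > 0" "A \<subseteq> mink B r'" "B \<subseteq> mink A r'" "r' < r"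
    using cInf_lessD[of "{r. r > 0 \<and> A \<subseteq> mink B r \<and> B \<subseteq> mink A r}" r] assms
    by (auto simp: hdist_mink)
  have mono: "mink X r' \<subseteq> mink X r" for X
    unfolding mink_def using r' by fastforce
  show ?thesis using r' mono by blast
qed

lemma bounded_R:
  fixes A B :: "'a::euclidean_space set"
  assumes "bounded A" "bounded B" "A \<noteq> {}" "B \<noteq> {}"
  shows "\<exists>r0. r0 > 0 \<and> A \<subseteq> mink B r0 \<and> B \<subseteq> mink A r0"
proof -
  obtain a where a: "\<And>z. z \<in> A \<Longrightarrow> norm z \<le> a" using assms(1) bounded_iff by blast
  obtain b where b: "\<And>z. z \<in> B \<Longrightarrow> norm z \<le> b" using assms(2) bounded_iff by blast
  obtain a0 where a0: "a0 \<in> A" using assms by blast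
  obtain b0 where b0: "b0 \<in> B" using assms by blast
  have pa: "a \<ge> 0" using a[OF a0] norm_ge_zero[of a0] by linarith
  have pb: "b \<ge> 0" using b[OF b0] norm_ge_zero[of b0] by linarith
  define r where "r = a + b + 1"
  have "A \<subseteq> mink B r"
  proof
    fix z assume z: "z \<in> A"
    have "norm (z - b0) \<le> r" using a[OF z] b[OF b0] norm_triangle_ineq4[of z b0] unfolding r_def by linarith
    then have "z - b0 \<in> cball 0 r" by simp
    moreover have "z = b0 + (z - b0)" by simp
    ultimately show "z \<in> mink B r" unfolding mink_def using b0 by blast
  qed
  moreover have "B \<subseteq> mink A r"
  proof
    fix z assume z: "z \<in> B"
    have "norm (z - a0) \<le> r" using b[OF z] a[OF a0] norm_triangle_ineq4[of z a0] unfolding r_def by linarith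
    then have "z - a0 \<in> cball 0 r" by simp
    moreover have "z = a0 + (z - a0)" by simp
    ultimately show "z \<in> mink A r" unfolding mink_def using a0 by blast
  qed
  ultimately show ?thesis using pa pb unfolding r_def by (intro exI[of _ "a+b+1"]) auto
qed

lemma midpoint_unique:
  fixes x y n :: "'a::euclidean_space"
  assumes "dist x n \<le> dist x y / 2" "dist y n \<le> dist x y / 2"
  shows "n = (1/2) *\<^sub>R (x + y)"
proof -
  define m where "m = (1/2) *\<^sub>R (x + y)"
  have par: "(norm (x - n))^2 + (norm (y - n))^2 = 2 * (norm (n - m))^2 + (norm (x - y))^2 / 2"
    unfolding m_def power2_norm_eq_inner
    apply (simp add: inner_diff_left inner_diff_right inner_add_left inner_add_right inner_commute algebra_simps)
    apply (simp add: field_simps)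
    done
  have "(norm (x - n))^2 \<le> (norm (x - y) / 2)^2"
    using assms(1) by (intro power_mono) (auto simp: dist_norm)
  moreover have "(norm (y - n))^2 \<le> (norm (x - y) / 2)^2"
    using assms(2) by (intro power_mono) (auto simp: dist_norm)
  moreover have "(norm (x - y) / 2)^2 = (norm (x - y))^2 / 4" by (simp add: power_divide)
  ultimately have "(norm (n - m))^2 \<le> 0" using par by linarith
  then have "(norm (n - m))^2 = 0" using zero_le_power2[of "norm (n - m)"] by linarith
  then show ?thesis unfolding m_def by simp
qed

lemma eps_le:
  fixes a b :: real
  assumes "\<And>e. e > 0 \<Longrightarrow> a \<le> b + e"
  shows "a \<le> b"
  using assms field_le_epsilon by blast

lemma cball_S: "cball (p::'a::euclidean_space) 1 \<in> S_set"
  unfolding S_set_def convex_body_def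
  by (auto intro!: exI[of _ "{p}"])

lemma sing_S: "{p::'a::euclidean_space} \<in> S_set"
proof -
  have "{p} = (\<Inter>c\<in>sphere p 1. cball c 1)"
  proof
    show "{p} \<subseteq> (\<Inter>c\<in>sphere p 1. cball c 1)" by (auto simp: dist_commute)
  next
    show "(\<Inter>c\<in>sphere p 1. cball c 1) \<subseteq> {p}"
    proof
      fix z assume z: "z \<in> (\<Inter>c\<in>sphere p 1. cball c 1)"
      show "z \<in> {p}"
      proof (rule ccontr)
        assume "z \<notin> {p}"
        then have t: "norm (z - p) > 0" by simp
        define t where "t = norm (z - p)"
        define c where "c = p - (1/t) *\<^sub>R (z - p)"
        have "c \<in> sphere p 1" using t unfolding c_def t_def by (simp add: dist_norm)
        then have dle: "dist c z \<le> 1" using z by auto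
        have ze: "z - c = (1 + 1/t) *\<^sub>R (z - p)" unfolding c_def by (simp add: algebra_simps)
        have tp: "t > 0" "norm (z - p) = t" using t unfolding t_def by auto
        have pos: "1 + 1/t > 0" using tp by (simp add: add_pos_pos)
        have "dist c z = norm (z - c)" by (simp add: dist_norm norm_minus_commute)
        also have "\<dots> = norm ((1 + 1/t) *\<^sub>R (z - p))" by (rule arg_cong[where f=norm, OF ze])
        also have "\<dots> = (1 + 1/t) * t" using pos tp by simp
        finally have "dist c z = (1 + 1/t) * t" .
        moreover have "(1 + 1/t) * t = t + 1" using tp(1) by (simp add: distrib_right)
        ultimately have "dist c z = t + 1" by simp
        then show False using dle tp by simp
      qed
    qed
  qed
  moreover have "compact {p}" "convex {p}" "{p} \<noteq> {}" by auto
  ultimately show ?thesis unfolding S_set_def convex_body_def by blast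
qed

lemma S_bounded: "N \<in> S_set \<Longrightarrow> bounded N \<and> N \<noteq> {}"
  unfolding S_set_def convex_body_def using compact_imp_bounded by blast

lemma half_sum_cball:
  fixes x y :: "'a::euclidean_space"
  assumes "s \<ge> 0"
  shows "half_sum (cball x s) (cball y s) = cball ((1/2) *\<^sub>R (x + y)) s"
proof
  show "half_sum (cball x s) (cball y s) \<subseteq> cball ((1/2) *\<^sub>R (x + y)) s"
  proof
    fix z assume "z \<in> half_sum (cball x s) (cball y s)"
    then obtain a b where ab: "z = (1/2) *\<^sub>R (a + b)" "dist x a \<le> s" "dist y b \<le> s"
      unfolding half_sum_def by auto
    have "(1/2) *\<^sub>R (x + y) - z = (1/2) *\<^sub>R ((x - a) + (y - b))" using ab(1) by (simp add: algebra_simps)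
    then have "dist ((1/2) *\<^sub>R (x + y)) z = (1/2) * norm ((x - a) + (y - b))" by (simp add: dist_norm)
    also have "\<dots> \<le> (1/2) * (norm (x - a) + norm (y - b))" using norm_triangle_ineq by simp
    also have "\<dots> \<le> s" using ab by (simp add: dist_norm)
    finally show "z \<in> cball ((1/2) *\<^sub>R (x + y)) s" by simp
  qed
next
  show "cball ((1/2) *\<^sub>R (x + y)) s \<subseteq> half_sum (cball x s) (cball y s)"
  proof
    fix z assume z: "z \<in> cball ((1/2) *\<^sub>R (x + y)) s"
    define w where "w = z - (1/2) *\<^sub>R (x + y)"
    have "norm w \<le> s" using z unfolding w_def by (simp add: dist_norm norm_minus_commute)
    then have "x + w \<in> cball x s" "y + w \<in> cball y s" by (auto simp: dist_norm)
    moreover have "z = (1/2) *\<^sub>R ((x + w) + (y + w))"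
    proof -
      have "(1/2) *\<^sub>R ((x + w) + (y + w)) = (1/2) *\<^sub>R (x + y) + ((1/2) *\<^sub>R w + (1/2) *\<^sub>R w)"
        by (simp add: algebra_simps)
      also have "(1/2) *\<^sub>R w + (1/2) *\<^sub>R w = w" by (rule half_half)
      finally show ?thesis unfolding w_def by simp
    qed
    ultimately show "z \<in> half_sum (cball x s) (cball y s)" unfolding half_sum_def by blast
  qed
qed

lemma uniq_points:
  fixes x y :: "'a::euclidean_space"
  assumes N: "N \<in> S_set" and h1: "hdist {x} N = dist x y / 2" and h2: "hdist {y} N = dist x y / 2"
  shows "N = {(1/2) *\<^sub>R (x + y)}"
proof -
  have bN: "bounded N" "N \<noteq> {}" using S_bounded[OF N] by auto
  have key: "dist p n \<le> dist x y / 2" if hp: "hdist {p} N = dist x y / 2" and n: "n \<in> N" for p n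
  proof (rule eps_le)
    fix e :: real assume e: "e > 0"
    have "hdist {p} N < dist x y / 2 + e" using hp e by simp
    moreover have "\<exists>r0. r0 > 0 \<and> {p} \<subseteq> mink N r0 \<and> N \<subseteq> mink {p} r0"
      using bounded_R[of "{p}" N] bN by auto
    ultimately have "N \<subseteq> mink {p} (dist x y / 2 + e)" using hdist_less by blast
    also have "mink {p} (dist x y / 2 + e) = cball p (dist x y / 2 + e)"
      using mink_cball[of 0 "dist x y / 2 + e" p] e by simp
    finally show "dist p n \<le> dist x y / 2 + e" using n by auto
  qed
  have "N \<subseteq> {(1/2) *\<^sub>R (x + y)}"
  proof
    fix n assume n: "n \<in> N"
    show "n \<in> {(1/2) *\<^sub>R (x + y)}" using midpoint_unique[OF key[OF h1 n] key[OF h2 n]] by simp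
  qed
  then show ?thesis using bN by blast
qed

lemma uniq_balls:
  fixes x y :: "'a::euclidean_space"
  assumes N: "N \<in> S_set" and h1: "hdist (cball x 1) N = dist x y / 2"
    and h2: "hdist (cball y 1) N = dist x y / 2"
  shows "N = cball ((1/2) *\<^sub>R (x + y)) 1"
proof -
  have bN: "bounded N" "N \<noteq> {}" using S_bounded[OF N] by auto
  obtain C where C: "N = (\<Inter>c\<in>C. cball c 1)" using N unfolding S_set_def by auto
  have Cne: "C \<noteq> {}" using C bN(1) by auto
  have key: "dist p c \<le> dist x y / 2" if hp: "hdist (cball p 1) N = dist x y / 2" and c: "c \<in> C" for p c
  proof (rule eps_le)
    fix e :: real assume e: "e > 0"
    have "hdist (cball p 1) N < dist x y / 2 + e" using hp e by simp
    moreover have "\<exists>r0. r0 > 0 \<and> cball p 1 \<subseteq> mink N r0 \<and> N \<subseteq> mink (cball p 1) r0"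
      using bounded_R[of "cball p 1" N] bN by auto
    ultimately have "cball p 1 \<subseteq> mink N (dist x y / 2 + e)" using hdist_less by blast
    also have "\<dots> \<subseteq> mink (cball c 1) (dist x y / 2 + e)"
      by (rule mink_mono) (use C c in auto)
    also have "\<dots> = cball c (1 + (dist x y / 2 + e))"
      using mink_cball[of 1 "dist x y / 2 + e" c] e by simp
    finally have "dist p c + 1 \<le> 1 + (dist x y / 2 + e)"
      using cball_subset_cball_iff[of p 1 c "1 + (dist x y / 2 + e)"] by simp
    then show "dist p c \<le> dist x y / 2 + e" by simp
  qed
  have "C \<subseteq> {(1/2) *\<^sub>R (x + y)}"
  proof
    fix c assume c: "c \<in> C"
    show "c \<in> {(1/2) *\<^sub>R (x + y)}"
      using midpoint_unique[OF key[OF h1 c] key[OF h2 c]] by simp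
  qed
  then have "C = {(1/2) *\<^sub>R (x + y)}" using Cne by blast
  then show ?thesis using C by simp
qed

lemma cute_points: "S_cute {x::'a::euclidean_space} {y}"
proof -
  have hs: "half_sum {x} {y} = {(1/2) *\<^sub>R (x + y)}"
    using half_sum_cball[of 0 x y] by simp
  have hd: "hdist {p} {q} = dist p q" for p q :: 'a
    using hdist_cball[of 0 p q] by simp
  have u: "\<forall>N\<in>S_set. hdist {x} N = dist x y / 2 \<and> hdist {y} N = dist x y / 2 \<longrightarrow> N = {(1/2) *\<^sub>R (x + y)}"
    using uniq_points by blast
  show ?thesis unfolding S_cute_def Let_def hs hd
    using sing_S mid_dist u by blast
qed

lemma cute_balls: "S_cute (cball (x::'a::euclidean_space) 1) (cball y 1)"
proof -
  have hs: "half_sum (cball x 1) (cball y 1) = cball ((1/2) *\<^sub>R (x + y)) 1"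
    using half_sum_cball[of 1 x y] by simp
  have hd: "hdist (cball p 1) (cball q 1) = dist p q" for p q :: 'a
    using hdist_cball[of 1 p q] by simp
  have u: "\<forall>N\<in>S_set. hdist (cball x 1) N = dist x y / 2 \<and> hdist (cball y 1) N = dist x y / 2 \<longrightarrow> N = cball ((1/2) *\<^sub>R (x + y)) 1"
    using uniq_balls by blast
  show ?thesis unfolding S_cute_def Let_def hs hd
    using cball_S mid_dist u by blast
qed

theorem lemma5:
  fixes x y :: "'a::euclidean_space"
  shows "S_cute {x} {y} \<and> S_cute ((\<lambda>v. x + v) ` cball 0 1) ((\<lambda>v. y + v) ` cball 0 1)"
proof -
  have "(\<lambda>v. x + v) ` cball 0 1 = cball x 1" "(\<lambda>v. y + v) ` cball 0 1 = cball y 1"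
    using cball_translation[of x 0 1] cball_translation[of y 0 1] by simp_all
  then show ?thesis by (simp add: cute_points cute_balls)
qed

end
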